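(* Let $(V,d,k,q)$ be an instance of the individually fair $k$-center with outliers problem (IF$k$CO) as defined in the context, let $l\ge 0$ be an integer, and let $(S,O,\sigma)$ be the output of the refined algorithm (Algorithm 3) described in the context, run on this instance with parameter $l$ (with arbitrary tie-breaking). Then $(S,O,\sigma)$ is a feasible solution, i.e. $|S|\le k$ and $|O|\le q$, and $$\alpha(S,O,\sigma)\le 4\cdot \mathrm{OPT},$$ where $\mathrm{OPT}$ is the minimum of $\alpha(S',O',\sigma')$ over all feasible solutions $(S',O',\sigma')$. That is, Algorithm 3 is a $4$-approximation algorithm for the IF$k$CO.
   Context: IF$k$CO instance: a finite set $V$ with $|V|=n$, a metric $d$ on $V$ (nonnegative, symmetric, $d_{ii}=0$, triangle inequality), and integers $k\ge 1$ and $q\ge 0$. For $i\in V$, $NR_q(i)$ is the distance from $i$ to its $\lceil (n-q)/k\rceil$-th nearest neighbor in $V$, where $i$ counts as its own (first) nearest neighbor. A solution is $(S,O,\sigma)$ with $S,O\subseteq V$ and $\sigma:V\setminus O\to S$; feasible if $|S|\le k$, $|O|\le q$. Its outlier-related fairness ratio is $\alpha(S,O,\sigma)=\max_{i\in V\setminus O} d_{\sigma(i)i}/NR_q(i)$. For a parameter $\beta>0$, the procedure $A(\beta)$ is: set $P:=V$, $S:=\emptyset$; while $P\ne\emptyset$ and $|S|<k$: pick $s\in P$ minimizing $NR_q(i)$ over $i\in P$, set $S:=S\cup\{s\}$, $P:=\{i\in P: d_{is}>\beta\, NR_q(i)\}$; finally set $O:=P$ and let $\sigma(i)$ be a nearest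 center in $S$ for each $i\in V\setminus O$. Algorithm 2 is $A(2)$. Algorithm 3 (input: instance and integer $l\ge0$): compute $(S,O,\sigma):=$ output of Algorithm 2; set $t:=0$, $\beta_1:=1$, $\beta_2:=2$, $\beta:=\beta_1$. While $t<l$: run $A(\beta)$ obtaining $(S_\beta,O_\beta,\sigma_\beta)$; if $|O_\beta|>q$, set $\beta_1:=\beta$; if $|O_\beta|\le q$, set $(S,O,\sigma):=(S_\beta,O_\beta,\sigma_\beta)$ and $\beta_2:=\beta$; in either case then set $\beta:=(\beta_1+\beta_2)/2$ and $t:=t+1$. Output $(S,O,\sigma)$. *)

theory Defs
  imports Complex_Main "HOL-Library.Multiset"
begin

definition is_metric_on :: "'a set \<Rightarrow> ('a \<Rightarrow> 'a \<Rightarrow> real) \<Rightarrow> bool" where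
  "is_metric_on V d \<longleftrightarrow>
     (\<forall>i\<in>V. \<forall>j\<in>V. d i j \<ge> 0 \<and> d i j = d j i) \<and>
     (\<forall>i\<in>V. d i i = 0) \<and>
     (\<forall>i\<in>V. \<forall>j\<in>V. \<forall>l\<in>V. d i l \<le> d i j + d j l)"

definition nr_rank :: "'a set \<Rightarrow> nat \<Rightarrow> nat \<Rightarrow> nat" where
  "nr_rank V k q = nat \<lceil>(real (card V) - real q) / real k\<rceil>"

text \<open>NR_q(i): distance from i to its m-th nearest neighbour in V (i itself counts,
  distances sorted increasingly with multiplicity; the m-th entry has index m-1).\<close>
definition NR :: "'a set \<Rightarrow> ('a \<Rightarrow> 'a \<Rightarrow> real) \<Rightarrow> nat \<Rightarrow> nat \<Rightarrow> 'a \<Rightarrow> real" where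
  "NR V d k q i =
     sorted_list_of_multiset (image_mset (d i) (mset_set V)) ! (nr_rank V k q - 1)"

text \<open>Solutions (S,Out,sigma); sigma is only relevant on V - Out.\<close>
definition feasible ::
  "'a set \<Rightarrow> nat \<Rightarrow> nat \<Rightarrow> 'a set \<Rightarrow> 'a set \<Rightarrow> ('a \<Rightarrow> 'a) \<Rightarrow> bool" where
  "feasible V k q S Out \<sigma> \<longleftrightarrow>
     S \<subseteq> V \<and> Out \<subseteq> V \<and> card S \<le> k \<and> card Out \<le> q \<and> (\<forall>i\<in>V - Out. \<sigma> i \<in> S)"

definition alpha ::
  "'a set \<Rightarrow> ('a \<Rightarrow> 'a \<Rightarrow> real) \<Rightarrow> nat \<Rightarrow> nat \<Rightarrow> 'a set \<Rightarrow> 'a set \<Rightarrow> ('a \<Rightarrow> 'a) \<Rightarrow> real" where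
  "alpha V d k q S Out \<sigma> =
     Max (insert 0 ((\<lambda>i. d (\<sigma> i) i / NR V d k q i) ` (V - Out)))"

definition OPT :: "'a set \<Rightarrow> ('a \<Rightarrow> 'a \<Rightarrow> real) \<Rightarrow> nat \<Rightarrow> nat \<Rightarrow> real" where
  "OPT V d k q = Inf {alpha V d k q S Out \<sigma> | S Out \<sigma>. feasible V k q S Out \<sigma>}"

text \<open>One iteration of the while loop of A(beta) on state (P,S), with arbitrary
  tie-breaking among minimisers of NR over P.\<close>
definition A_step ::
  "'a set \<Rightarrow> ('a \<Rightarrow> 'a \<Rightarrow> real) \<Rightarrow> nat \<Rightarrow> nat \<Rightarrow> real \<Rightarrow>
   'a set \<times> 'a set \<Rightarrow> 'a set \<times> 'a set \<Rightarrow> bool" where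
  "A_step V d k q \<beta> st st' \<longleftrightarrow>
     (case st of (P, S) \<Rightarrow>
       P \<noteq> {} \<and> card S < k \<and>
       (\<exists>s\<in>P. (\<forall>i\<in>P. NR V d k q s \<le> NR V d k q i) \<and>
              st' = ({i\<in>P. d i s > \<beta> * NR V d k q i}, S \<union> {s})))"

definition A_out ::
  "'a set \<Rightarrow> ('a \<Rightarrow> 'a \<Rightarrow> real) \<Rightarrow> nat \<Rightarrow> nat \<Rightarrow> real \<Rightarrow>
   'a set \<Rightarrow> 'a set \<Rightarrow> ('a \<Rightarrow> 'a) \<Rightarrow> bool" where
  "A_out V d k q \<beta> S Out \<sigma> \<longleftrightarrow>
     (\<exists>P. (A_step V d k q \<beta>)\<^sup>*\<^sup>* (V, {}) (P, S) \<and> (P = {} \<or> \<not> card S < k) \<and>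
          Out = P \<and>
          (\<forall>i\<in>V - Out. \<sigma> i \<in> S \<and> (\<forall>s\<in>S. d (\<sigma> i) i \<le> d s i)))"

text \<open>The bisection loop of Algorithm 3. First argument: number of remaining
  iterations (l - t); then beta1, beta2, beta; current solution; final output.\<close>
inductive alg3_loop ::
  "'a set \<Rightarrow> ('a \<Rightarrow> 'a \<Rightarrow> real) \<Rightarrow> nat \<Rightarrow> nat \<Rightarrow> nat \<Rightarrow> real \<Rightarrow> real \<Rightarrow> real \<Rightarrow>
   'a set \<times> 'a set \<times> ('a \<Rightarrow> 'a) \<Rightarrow> 'a set \<times> 'a set \<times> ('a \<Rightarrow> 'a) \<Rightarrow> bool"
  for V d k q where
  stop: "alg3_loop V d k q 0 \<beta>1 \<beta>2 \<beta> sol sol"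
| infeas: "A_out V d k q \<beta> S' Out' \<sigma>' \<Longrightarrow> card Out' > q \<Longrightarrow>
     alg3_loop V d k q r \<beta> \<beta>2 ((\<beta> + \<beta>2) / 2) sol res \<Longrightarrow>
     alg3_loop V d k q (Suc r) \<beta>1 \<beta>2 \<beta> sol res"
| feas: "A_out V d k q \<beta> S' Out' \<sigma>' \<Longrightarrow> card Out' \<le> q \<Longrightarrow>
     alg3_loop V d k q r \<beta>1 \<beta> ((\<beta>1 + \<beta>) / 2) (S', Out', \<sigma>') res \<Longrightarrow>
     alg3_loop V d k q (Suc r) \<beta>1 \<beta>2 \<beta> sol res"

definition alg3_out ::
  "'a set \<Rightarrow> ('a \<Rightarrow> 'a \<Rightarrow> real) \<Rightarrow> nat \<Rightarrow> nat \<Rightarrow> nat \<Rightarrow>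
   'a set \<Rightarrow> 'a set \<Rightarrow> ('a \<Rightarrow> 'a) \<Rightarrow> bool" where
  "alg3_out V d k q l S Out \<sigma> \<longleftrightarrow>
     (\<exists>S0 Out0 \<sigma>0. A_out V d k q 2 S0 Out0 \<sigma>0 \<and>
        alg3_loop V d k q l 1 2 1 (S0, Out0, \<sigma>0) (S, Out, \<sigma>))"

end

theory Submission
  imports Defs
begin

lemma sorted_nth_count:
  fixes L :: "real list"
  assumes "sorted L" "1 \<le> m" "m \<le> length L"
  shows "m \<le> length (filter (\<lambda>x. x \<le> L!(m-1)) L)"
proof -
  have "\<forall>x\<in>set (take m L). x \<le> L!(m-1)"
  proof
    fix x assume "x \<in> set (take m L)"
    then obtain i where i: "i < length (take m L)" "x = take m L ! i" by (metis in_set_conv_nth)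
    then have "i \<le> m - 1" "m - 1 < length L" using assms by auto
    then have "L!i \<le> L!(m-1)" using assms(1) by (simp add: sorted_nth_mono)
    then show "x \<le> L!(m-1)" using i by simp
  qed
  then have "filter (\<lambda>x. x \<le> L!(m-1)) (take m L) = take m L" by simp
  moreover have "L = take m L @ drop m L" by simp
  then have "length (filter (\<lambda>x. x \<le> L!(m-1)) L) =
     length (filter (\<lambda>x. x \<le> L!(m-1)) (take m L)) + length (filter (\<lambda>x. x \<le> L!(m-1)) (drop m L))"
    by (metis filter_append length_append)
  ultimately show ?thesis using assms by simp
qed

lemma sorted_nth_le:
  fixes L :: "real list"
  assumes "sorted L" "1 \<le> m" "m \<le> length (filter (\<lambda>x. x \<le> t) L)"
  shows "L!(m-1) \<le> t"
proof (rule ccontr)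
  assume c: "\<not> L!(m-1) \<le> t"
  have ml: "m \<le> length L" using assms(3) length_filter_le order_trans by blast
  have "\<forall>x\<in>set (drop (m-1) L). \<not> x \<le> t"
  proof
    fix x assume "x \<in> set (drop (m-1) L)"
    then obtain i where i: "i < length (drop (m-1) L)" "x = drop (m-1) L ! i" by (metis in_set_conv_nth)
    then have "x = L ! (m - 1 + i)" "m - 1 + i < length L" using ml assms by auto
    moreover have "L!(m-1) \<le> L!(m-1+i)" using assms(1) \<open>m - 1 + i < length L\<close> by (simp add: sorted_nth_mono)
    ultimately show "\<not> x \<le> t" using c by auto
  qed
  then have "filter (\<lambda>x. x \<le> t) (drop (m-1) L) = []" by (simp add: filter_empty_conv)
  moreover have "L = take (m-1) L @ drop (m-1) L" by simp
  then have "length (filter (\<lambda>x. x \<le> t) L) =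
     length (filter (\<lambda>x. x \<le> t) (take (m-1) L)) + length (filter (\<lambda>x. x \<le> t) (drop (m-1) L))"
    by (metis filter_append length_append)
  moreover have "length (filter (\<lambda>x. x \<le> t) (take (m-1) L)) \<le> m - 1"
    by (metis length_filter_le length_take min.bounded_iff order_trans nle_le)
  ultimately show False using assms by simp
qed

lemma len_filter_sl:
  assumes "finite V"
  shows "length (filter (\<lambda>x. x \<le> t) (sorted_list_of_multiset (image_mset (d i) (mset_set V))))
     = card {j\<in>V. d i j \<le> t}"
proof -
  have "length (filter (\<lambda>x. x \<le> t) (sorted_list_of_multiset (image_mset (d i) (mset_set V))))
     = size (mset (filter (\<lambda>x. x \<le> t) (sorted_list_of_multiset (image_mset (d i) (mset_set V)))))"
    by (metis size_mset)
  also have "\<dots> = size (filter_mset (\<lambda>x. x \<le> t) (image_mset (d i) (mset_set V)))" by simp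
  also have "\<dots> = card {j\<in>V. d i j \<le> t}"
    by (simp add: filter_mset_image_mset assms)
  finally show ?thesis .
qed

lemma len_sl:
  assumes "finite V"
  shows "length (sorted_list_of_multiset (image_mset (d i) (mset_set V))) = card V"
  by (metis mset_sorted_list_of_multiset size_image_mset size_mset size_mset_set)

lemma NR_ball:
  assumes "finite V" "1 \<le> nr_rank V k q" "nr_rank V k q \<le> card V"
  shows "nr_rank V k q \<le> card {j\<in>V. d i j \<le> NR V d k q i}"
  using sorted_nth_count[of "sorted_list_of_multiset (image_mset (d i) (mset_set V))" "nr_rank V k q"]
    assms len_filter_sl[OF assms(1), of "sorted_list_of_multiset (image_mset (d i) (mset_set V)) ! (nr_rank V k q - 1)" d i] len_sl[OF assms(1), of d i]
  unfolding NR_def by simp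

lemma NR_le:
  assumes "finite V" "1 \<le> nr_rank V k q" "nr_rank V k q \<le> card {j\<in>V. d i j \<le> t}"
  shows "NR V d k q i \<le> t"
  using sorted_nth_le[of "sorted_list_of_multiset (image_mset (d i) (mset_set V))" "nr_rank V k q" t]
    assms len_filter_sl[OF assms(1), of t d i]
  unfolding NR_def by simp


locale inst =
  fixes V :: "'a set" and d :: "'a \<Rightarrow> 'a \<Rightarrow> real" and k q :: nat
  assumes fin: "finite V" and met: "is_metric_on V d" and k1: "k \<ge> 1"
    and pos: "\<forall>i\<in>V. NR V d k q i > 0"
begin

abbreviation "N \<equiv> NR V d k q"
abbreviation "m \<equiv> nr_rank V k q"

lemma dsym: "i \<in> V \<Longrightarrow> j \<in> V \<Longrightarrow> d i j = d j i"
  using met unfolding is_metric_on_def by blast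
lemma dnn: "i \<in> V \<Longrightarrow> j \<in> V \<Longrightarrow> d i j \<ge> 0"
  using met unfolding is_metric_on_def by blast
lemma dref: "i \<in> V \<Longrightarrow> d i i = 0"
  using met unfolding is_metric_on_def by blast
lemma dtri: "i \<in> V \<Longrightarrow> j \<in> V \<Longrightarrow> l \<in> V \<Longrightarrow> d i l \<le> d i j + d j l"
  using met unfolding is_metric_on_def by blast

lemma m_le: "m \<le> card V"
proof -
  have "(real (card V) - real q) / real k \<le> real (card V)"
  proof (cases "real (card V) - real q \<ge> 0")
    case True
    then have "(real (card V) - real q) / real k \<le> real (card V) - real q"
    proof -
      have "(real (card V) - real q) * 1 \<le> (real (card V) - real q) * real k"
        using k1 True by (intro mult_left_mono) auto
      then show ?thesis using k1 by (simp add: divide_le_eq)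
    qed
    then show ?thesis by simp
  next
    case False
    then have "(real (card V) - real q) / real k \<le> 0" using k1 by (simp add: divide_nonpos_pos)
    then show ?thesis by simp
  qed
  then have "\<lceil>(real (card V) - real q) / real k\<rceil> \<le> int (card V)"
    by (simp add: ceiling_le_iff)
  then show ?thesis unfolding nr_rank_def by (metis nat_le_iff)
qed

lemma km: "real (card V) \<le> real q + real k * real m"
proof -
  have "(real (card V) - real q) / real k \<le> real m"
  proof -
    have c: "of_int c \<le> real (nat c)" for c :: int by (cases "c \<ge> 0") auto
    show ?thesis unfolding nr_rank_def using c le_of_int_ceiling order_trans by blast
  qed
  then show ?thesis using k1 by (simp add: divide_le_eq algebra_simps)
qed

lemma km2: "m \<ge> 1 \<Longrightarrow> real k * (real m - 1) < real (card V) - real q"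
proof -
  assume "m \<ge> 1"
  then have "real m = of_int \<lceil>(real (card V) - real q) / real k\<rceil>"
    unfolding nr_rank_def by simp
  then have "real m - 1 < (real (card V) - real q) / real k"
    using ceiling_correct[of "(real (card V) - real q) / real k"] by linarith
  then show ?thesis using k1 by (simp add: less_divide_eq algebra_simps)
qed

lemma m1: assumes "V \<noteq> {}" shows "m \<ge> 1"
proof (rule ccontr)
  assume "\<not> m \<ge> 1"
  then have m0: "m = 0" by simp
  obtain i where i: "i \<in> V" using assms by blast
  let ?L = "sorted_list_of_multiset (image_mset (d i) (mset_set V))"
  have "{i} \<subseteq> {j\<in>V. d i j \<le> 0}" using i dref by auto
  then have "card {i} \<le> card {j\<in>V. d i j \<le> 0}"
    by (intro card_mono) (use fin in auto)
  then have "1 \<le> card {j\<in>V. d i j \<le> 0}" by simp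
  then have "?L ! (1 - 1) \<le> 0"
    using sorted_nth_le[of ?L 1 0] len_filter_sl[OF fin, of 0 d i] by simp
  then have "N i \<le> 0" unfolding NR_def using m0 by simp
  then show False using pos i by force
qed

definition inv :: "real \<Rightarrow> 'a set \<times> 'a set \<Rightarrow> bool" where
  "inv \<beta> st = (case st of (P, S) \<Rightarrow>
     P \<subseteq> V \<and> S \<subseteq> V \<and> card S \<le> k \<and> finite S \<and>
     (\<forall>i\<in>V-P. \<exists>s\<in>S. d i s \<le> \<beta> * N i) \<and>
     (\<forall>x\<in>P. \<forall>s\<in>S. d x s > \<beta> * N x) \<and>
     (\<forall>s\<in>S. \<forall>x\<in>P. N s \<le> N x))"

lemma inv_step:
  assumes "A_step V d k q \<beta> st st'" "inv \<beta> st"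
  shows "inv \<beta> st'"
proof -
  obtain P S where st: "st = (P, S)" by (cases st)
  from assms(1) obtain s where s: "P \<noteq> {}" "card S < k" "s \<in> P"
    "\<forall>i\<in>P. N s \<le> N i" "st' = ({i\<in>P. d i s > \<beta> * N i}, S \<union> {s})"
    unfolding A_step_def st by auto
  have I: "P \<subseteq> V" "S \<subseteq> V" "card S \<le> k" "finite S"
     "\<forall>i\<in>V-P. \<exists>s\<in>S. d i s \<le> \<beta> * N i"
     "\<forall>x\<in>P. \<forall>s\<in>S. d x s > \<beta> * N x"
     "\<forall>s\<in>S. \<forall>x\<in>P. N s \<le> N x"
    using assms(2) unfolding inv_def st by auto
  have "card (S \<union> {s}) \<le> k" using s(2) I(4) card_insert_le_m1
    by (metis Un_insert_right card_insert_if k1 less_eq_Suc_le sup_bot.right_neutral nless_le)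
  moreover have "\<forall>i\<in>V-{i\<in>P. d i s > \<beta> * N i}. \<exists>s'\<in>S \<union> {s}. d i s' \<le> \<beta> * N i"
    using I(5) by force
  ultimately show ?thesis unfolding inv_def s(5) using I s by auto
qed

lemma inv_run:
  assumes "(A_step V d k q \<beta>)\<^sup>*\<^sup>* (V, {}) st"
  shows "inv \<beta> st"
  using assms
proof (induction rule: rtranclp_induct)
  case base
  then show ?case unfolding inv_def by auto
next
  case (step y z)
  then show ?case using inv_step by blast
qed

definition B :: "'a \<Rightarrow> 'a set" where "B s = {j\<in>V. d s j \<le> N s}"

definition inv2 :: "'a set \<times> 'a set \<Rightarrow> bool" where
  "inv2 st = (case st of (P, S) \<Rightarrow>
     (\<Union>s\<in>S. B s) \<subseteq> V - P \<and> card S * m \<le> card (\<Union>s\<in>S. B s))"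

lemma inv2_step:
  assumes "A_step V d k q 2 st st'" "inv 2 st" "inv2 st"
  shows "inv2 st'"
proof -
  obtain P S where st: "st = (P, S)" by (cases st)
  from assms(1) obtain s where s: "P \<noteq> {}" "card S < k" "s \<in> P"
    "\<forall>i\<in>P. N s \<le> N i" "st' = ({i\<in>P. d i s > 2 * N i}, S \<union> {s})"
    unfolding A_step_def st by auto
  have I: "P \<subseteq> V" "S \<subseteq> V" "card S \<le> k" "finite S"
     "\<forall>i\<in>V-P. \<exists>s\<in>S. d i s \<le> 2 * N i"
     "\<forall>x\<in>P. \<forall>s\<in>S. d x s > 2 * N x"
     "\<forall>s\<in>S. \<forall>x\<in>P. N s \<le> N x"
    using assms(2) unfolding inv_def st by auto
  have J: "(\<Union>s\<in>S. B s) \<subseteq> V - P" "card S * m \<le> card (\<Union>s\<in>S. B s)"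
    using assms(3) unfolding inv2_def st by auto
  have sV: "s \<in> V" using s I by auto
  have Ns: "N s > 0" using pos sV by auto
  have sS: "s \<notin> S"
  proof
    assume "s \<in> S"
    then have "d s s > 2 * N s" using I(6) s(3) by auto
    then show False using dref[OF sV] Ns by simp
  qed
  have disj: "B s \<inter> (\<Union>a\<in>S. B a) = {}"
  proof (rule ccontr)
    assume "B s \<inter> (\<Union>a\<in>S. B a) \<noteq> {}"
    then obtain x a where x: "x \<in> B s" "a \<in> S" "x \<in> B a" by blast
    have aV: "a \<in> V" and xV: "x \<in> V" using x I(2) unfolding B_def by auto
    have "d s a \<le> d s x + d x a" using dtri sV aV xV by blast
    also have "\<dots> = d s x + d a x" using dsym aV xV by simp
    also have "\<dots> \<le> N s + N a" using x unfolding B_def by auto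
    also have "\<dots> \<le> 2 * N s" using I(7) x(2) s(3,4) by auto
    finally have "d s a \<le> 2 * N s" .
    moreover have "d s a > 2 * N s" using I(6) s(3) x(2) by auto
    ultimately show False by simp
  qed
  have Bsub: "B s \<subseteq> V - {i\<in>P. d i s > 2 * N i}"
  proof
    fix x assume x: "x \<in> B s"
    then have xV: "x \<in> V" unfolding B_def by auto
    show "x \<in> V - {i\<in>P. d i s > 2 * N i}"
    proof (rule ccontr)
      assume "x \<notin> V - {i\<in>P. d i s > 2 * N i}"
      then have "x \<in> P" "d x s > 2 * N x" using xV by auto
      moreover have "N s \<le> N x" using s(4) \<open>x \<in> P\<close> by auto
      moreover have "d x s = d s x" using dsym xV sV by simp
      moreover have "d s x \<le> N s" using x unfolding B_def by auto
      ultimately show False using Ns by linarith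
    qed
  qed
  have finB: "finite (B s)" "finite (\<Union>a\<in>S. B a)" using fin I(4) unfolding B_def by auto
  have cB: "m \<le> card (B s)"
  proof (cases "V = {}")
    case True then show ?thesis using sV by auto
  next
    case False
    then show ?thesis unfolding B_def using NR_ball[OF fin m1[OF False] m_le] by blast
  qed
  have U: "(\<Union>a\<in>S \<union> {s}. B a) = B s \<union> (\<Union>a\<in>S. B a)" by auto
  have "card (\<Union>a\<in>S \<union> {s}. B a) = card (B s) + card (\<Union>a\<in>S. B a)"
    unfolding U using card_Un_disjoint[OF finB disj] .
  moreover have "card (S \<union> {s}) = card S + 1" using sS I(4) by simp
  ultimately have "card (S \<union> {s}) * m \<le> card (\<Union>a\<in>S \<union> {s}. B a)" using J(2) cB by simp
  moreover have "(\<Union>a\<in>S \<union> {s}. B a) \<subseteq> V - {i\<in>P. d i s > 2 * N i}"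
    using U Bsub J(1) by auto
  ultimately show ?thesis unfolding inv2_def s(5) by simp
qed

lemma inv2_run:
  assumes "(A_step V d k q 2)\<^sup>*\<^sup>* (V, {}) st"
  shows "inv2 st"
  using assms
proof (induction rule: rtranclp_induct)
  case base
  then show ?case unfolding inv2_def by auto
next
  case (step y z)
  then show ?case using inv2_step inv_run by blast
qed

lemma A_out_good:
  assumes "A_out V d k q \<beta> S Out \<sigma>" "0 \<le> \<beta>"
  shows "S \<subseteq> V \<and> Out \<subseteq> V \<and> card S \<le> k \<and> (\<forall>i\<in>V-Out. \<sigma> i \<in> S) \<and> alpha V d k q S Out \<sigma> \<le> \<beta>"
proof -
  obtain P where P: "(A_step V d k q \<beta>)\<^sup>*\<^sup>* (V, {}) (P, S)" "Out = P"
     "\<forall>i\<in>V - Out. \<sigma> i \<in> S \<and> (\<forall>s\<in>S. d (\<sigma> i) i \<le> d s i)"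
    using assms(1) unfolding A_out_def by blast
  have I: "P \<subseteq> V" "S \<subseteq> V" "card S \<le> k" "finite S"
     "\<forall>i\<in>V-P. \<exists>s\<in>S. d i s \<le> \<beta> * N i"
    using inv_run[OF P(1)] unfolding inv_def by auto
  have "\<forall>i\<in>V - Out. d (\<sigma> i) i / N i \<le> \<beta>"
  proof
    fix i assume i: "i \<in> V - Out"
    then obtain s where s: "s \<in> S" "d i s \<le> \<beta> * N i" using I(5) P(2) by blast
    have "d (\<sigma> i) i \<le> d s i" using P(3) i s by blast
    also have "\<dots> = d i s" using dsym I(2) s i by auto
    finally have "d (\<sigma> i) i \<le> \<beta> * N i" using s by simp
    moreover have "N i > 0" using pos i by auto
    ultimately show "d (\<sigma> i) i / N i \<le> \<beta>" by (simp add: divide_le_eq)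
  qed
  then have "alpha V d k q S Out \<sigma> \<le> \<beta>"
    unfolding alpha_def using fin assms(2) by (subst Max_le_iff) auto
  then show ?thesis using I P by auto
qed

lemma A_out_2:
  assumes "A_out V d k q 2 S Out \<sigma>"
  shows "card Out \<le> q"
proof -
  obtain P where P: "(A_step V d k q 2)\<^sup>*\<^sup>* (V, {}) (P, S)" "Out = P" "P = {} \<or> \<not> card S < k"
    using assms(1) unfolding A_out_def by blast
  have I: "P \<subseteq> V" "card S \<le> k"
    using inv_run[OF P(1)] unfolding inv_def by auto
  have J: "(\<Union>s\<in>S. B s) \<subseteq> V - P" "card S * m \<le> card (\<Union>s\<in>S. B s)"
    using inv2_run[OF P(1)] unfolding inv2_def by auto
  show ?thesis
  proof (cases "P = {}")
    case True then show ?thesis using P by simp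
  next
    case False
    then have "card S = k" using P(3) I by simp
    have "card (\<Union>s\<in>S. B s) \<le> card (V - P)" by (rule card_mono) (use fin J(1) in auto)
    then have "k * m \<le> card (V - P)" using J(2) \<open>card S = k\<close> by simp
    then have a: "real k * real m \<le> real (card (V - P))" by (metis of_nat_le_iff of_nat_mult)
    have "card P \<le> card V" by (rule card_mono[OF fin I(1)])
    moreover have "card (V - P) = card V - card P"
      using card_Diff_subset[OF finite_subset[OF I(1) fin] I(1)] .
    ultimately have "real (card V) = real (card P) + real (card (V - P))" by simp
    moreover have "real (card V) \<le> real q + real k * real m" using km .
    ultimately have "real (card P) \<le> real q" using a by simp
    then show ?thesis using P by simp
  qed
qed

lemma lower:
  assumes "feasible V k q S Out \<sigma>" "V \<noteq> {}"
  shows "1/2 \<le> alpha V d k q S Out \<sigma>"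
proof -
  have F: "S \<subseteq> V" "Out \<subseteq> V" "card S \<le> k" "card Out \<le> q" "\<forall>i\<in>V - Out. \<sigma> i \<in> S"
    using assms(1) unfolding feasible_def by auto
  have mm: "m \<ge> 1" using m1 assms(2) .
  define C where "C c = {i \<in> V - Out. \<sigma> i = c}" for c
  have "\<exists>c\<in>S. m \<le> card (C c)"
  proof (rule ccontr)
    assume "\<not> (\<exists>c\<in>S. m \<le> card (C c))"
    then have lt: "\<forall>c\<in>S. card (C c) \<le> m - 1" by auto
    have "V - Out = (\<Union>c\<in>S. C c)" using F unfolding C_def by auto
    then have "card (V - Out) \<le> (\<Sum>c\<in>S. card (C c))"
      using card_UN_le[OF finite_subset[OF F(1) fin], of C] by simp
    also have "\<dots> \<le> (\<Sum>c\<in>S. m - 1)" using lt by (intro sum_mono) auto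
    also have "\<dots> = card S * (m - 1)" by simp
    also have "\<dots> \<le> k * (m - 1)" using F(3) by simp
    finally have a: "card (V - Out) \<le> k * (m - 1)" .
    have "card Out \<le> card V" by (rule card_mono[OF fin F(2)])
    moreover have "card (V - Out) = card V - card Out"
      using card_Diff_subset[OF finite_subset[OF F(2) fin] F(2)] .
    ultimately have "card V = card Out + card (V - Out)" by simp
    then have "real (card V) - real q \<le> real (k * (m - 1))" using a F(4) by linarith
    also have "\<dots> = real k * (real m - 1)" using mm by (simp add: of_nat_diff)
    finally show False using km2[OF mm] by linarith
  qed
  then obtain c where c: "c \<in> S" "m \<le> card (C c)" by blast
  have finC: "finite (C c)" using fin unfolding C_def by auto
  have neC: "C c \<noteq> {}" using c mm by auto
  have "Max (d c ` C c) \<in> d c ` C c" using finC neC by (intro Max_in) auto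
  then obtain j where j: "j \<in> C c" "d c j = Max (d c ` C c)" by (metis imageE)
  have jmax: "\<forall>x\<in>C c. d c x \<le> d c j" using j finC by auto
  have cV: "c \<in> V" using c F by auto
  have jV: "j \<in> V" and sj: "\<sigma> j = c" and jO: "j \<in> V - Out" using j unfolding C_def by auto
  have "C c \<subseteq> {x\<in>V. d j x \<le> 2 * d c j}"
  proof
    fix x assume x: "x \<in> C c"
    then have xV: "x \<in> V" unfolding C_def by auto
    have "d j x \<le> d j c + d c x" using dtri jV cV xV by blast
    also have "\<dots> = d c j + d c x" using dsym jV cV by simp
    also have "\<dots> \<le> 2 * d c j" using jmax x by auto
    finally show "x \<in> {x\<in>V. d j x \<le> 2 * d c j}" using xV by simp
  qed
  then have "card (C c) \<le> card {x\<in>V. d j x \<le> 2 * d c j}" by (intro card_mono) (use fin in auto)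
  then have "m \<le> card {x\<in>V. d j x \<le> 2 * d c j}" using c(2) by linarith
  then have Nj: "N j \<le> 2 * d c j" using NR_le[OF fin mm] by blast
  have Npos: "N j > 0" using pos jV by auto
  have "1/2 \<le> d (\<sigma> j) j / N j" using Nj Npos sj dsym[OF cV jV] by (simp add: le_divide_eq)
  also have "\<dots> \<le> alpha V d k q S Out \<sigma>"
    unfolding alpha_def using fin jO by (intro Max_ge) auto
  finally show ?thesis .
qed

definition good :: "'a set \<times> 'a set \<times> ('a \<Rightarrow> 'a) \<Rightarrow> bool" where
  "good sol = (case sol of (S, Out, \<sigma>) \<Rightarrow> feasible V k q S Out \<sigma> \<and> alpha V d k q S Out \<sigma> \<le> 2)"

lemma loop:
  assumes "alg3_loop V d k q r \<beta>1 \<beta>2 \<beta> sol res"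
  shows "1 \<le> \<beta>1 \<Longrightarrow> \<beta>2 \<le> 2 \<Longrightarrow> \<beta>1 \<le> \<beta> \<Longrightarrow> \<beta> \<le> \<beta>2 \<Longrightarrow> good sol \<Longrightarrow> good res"
  using assms
proof (induction rule: alg3_loop.induct)
  case (stop \<beta>1 \<beta>2 \<beta> sol)
  then show ?case by simp
next
  case (infeas \<beta> S' Out' \<sigma>' r \<beta>2 sol res \<beta>1)
  then show ?case by simp
next
  case (feas \<beta> S' Out' \<sigma>' r \<beta>1 res \<beta>2 sol)
  have "good (S', Out', \<sigma>')"
    using A_out_good[OF feas(1)] feas unfolding good_def feasible_def by auto
  then show ?case using feas by simp
qed

lemma main:
  assumes "alg3_out V d k q l S Out \<sigma>"
  shows "card S \<le> k \<and> card Out \<le> q \<and> alpha V d k q S Out \<sigma> \<le> 4 * OPT V d k q"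
proof -
  obtain S0 Out0 \<sigma>0 where a: "A_out V d k q 2 S0 Out0 \<sigma>0"
    "alg3_loop V d k q l 1 2 1 (S0, Out0, \<sigma>0) (S, Out, \<sigma>)"
    using assms unfolding alg3_out_def by blast
  have "good (S0, Out0, \<sigma>0)"
    using A_out_good[OF a(1)] A_out_2[OF a(1)] unfolding good_def feasible_def by auto
  then have g: "good (S, Out, \<sigma>)" using loop[OF a(2)] by simp
  then have F: "feasible V k q S Out \<sigma>" "alpha V d k q S Out \<sigma> \<le> 2" unfolding good_def by auto
  let ?X = "{alpha V d k q S Out \<sigma> | S Out \<sigma>. feasible V k q S Out \<sigma>}"
  have ne: "?X \<noteq> {}" using F by blast
  have "alpha V d k q S Out \<sigma> \<le> 4 * OPT V d k q"
  proof (cases "V = {}")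
    case True
    then have "\<And>S Out \<sigma>. alpha V d k q S Out \<sigma> = 0" unfolding alpha_def by simp
    then have "?X = {0}" using ne by auto
    then show ?thesis unfolding OPT_def using True \<open>\<And>S Out \<sigma>. alpha V d k q S Out \<sigma> = 0\<close> by simp
  next
    case False
    have "1/2 \<le> Inf ?X" using ne lower[OF _ False] by (intro cInf_greatest) auto
    then show ?thesis using F unfolding OPT_def by simp
  qed
  then show ?thesis using F unfolding feasible_def by auto
qed

end

theorem theorem2:
  fixes V :: "'a set" and d :: "'a \<Rightarrow> 'a \<Rightarrow> real" and k q l :: nat
    and S Out :: "'a set" and \<sigma> :: "'a \<Rightarrow> 'a"
  assumes "finite V"
    and "is_metric_on V d"
    and "k \<ge> 1"
    and "\<forall>i\<in>V. NR V d k q i > 0"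
    and "alg3_out V d k q l S Out \<sigma>"
  shows "card S \<le> k \<and> card Out \<le> q \<and> alpha V d k q S Out \<sigma> \<le> 4 * OPT V d k q"
proof -
  interpret inst V d k q using assms(1-4) by unfold_locales
  show ?thesis using main[OF assms(5)] .
qed

end
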